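(* Let $D$ be a crossing optimal normalized 2-page book drawing of $K_n$ and $1\le i<j\le n$. Then for every integer $m$ with $1\le m\le\min\{j-\lfloor n/2\rfloor-1,\,j-i-1\}$, the $m$-th entry in the order associated to $(i,j)$ has at least $\min\{j-\lceil n/2\rceil-m,\,i-1\}$ entries above it whose color differs from the color of $(i,j)$.
   Context: Normalized 2-page book drawing of $K_n$: vertices $(1,0),\dots,(n,0)$ labelled $1,\dots,n$; edges $i(i+1)$ on the spine; edge $1n$ in the upper half-plane; every other edge $ij$ a semicircle over $[i,j]$ in the upper or lower half-plane. Edges on the spine or in the upper half-plane are blue, others red. $M(D)$ has entries $(i,j)$, $1\le i<j\le n$ (row $i$, column $j$), colored as edge $ij$; entries $(i',j)$ with $i'<i$ are above $(i,j)$. The order associated to $(i,j)$ is the ordering of the entries $(i,l)$, $i<l<j$, that lists first those whose color differs from that of $(i,j)$ from right to left (decreasing $l$), followed by those with the same color as $(i,j)$ from left to right (increasing $l$). Crossing optimal: exactly $Z(n)=\frac14\lfloor\frac n2\rfloor\lfloor\frac{n-1}2\rfloor\lfloor\frac{n-2}2\rfloor\lfloor\frac{n-3}2\rfloor$ crossings. *)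

theory Defs
  imports Main
begin

text \<open>A normalized 2-page book drawing of K_n is encoded by its colouring
  blue i j (for 1 <= i < j <= n): True = blue (spine or upper half-plane),
  False = red (lower half-plane).\<close>

definition normalized_2page :: "nat \<Rightarrow> (nat \<Rightarrow> nat \<Rightarrow> bool) \<Rightarrow> bool" where
  "normalized_2page n blue \<longleftrightarrow>
     (\<forall>i. 1 \<le> i \<and> i < n \<longrightarrow> blue i (i + 1)) \<and> blue 1 n"

text \<open>Two semicircle edges ij and kl (i<j, k<l) in the same half-plane cross
  iff their endpoints interleave; spine edges and edges sharing an endpoint
  never cross.\<close>

definition crossings :: "nat \<Rightarrow> (nat \<Rightarrow> nat \<Rightarrow> bool) \<Rightarrow> nat" where
  "crossings n blue = card {(i, j, k, l). 1 \<le> i \<and> i < k \<and> k < j \<and> j < l \<and> l \<le> n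
                                         \<and> blue i j = blue k l}"

definition Z :: "nat \<Rightarrow> nat" where
  "Z n = ((n div 2) * ((n - 1) div 2) * ((n - 2) div 2) * ((n - 3) div 2)) div 4"

definition crossing_optimal :: "nat \<Rightarrow> (nat \<Rightarrow> nat \<Rightarrow> bool) \<Rightarrow> bool" where
  "crossing_optimal n blue \<longleftrightarrow> crossings n blue = Z n"

definition assoc_order :: "(nat \<Rightarrow> nat \<Rightarrow> bool) \<Rightarrow> nat \<Rightarrow> nat \<Rightarrow> nat list" where
  "assoc_order blue i j =
     filter (\<lambda>l. blue i l \<noteq> blue i j) (rev [i+1..<j]) @
     filter (\<lambda>l. blue i l = blue i j) [i+1..<j]"

definition above_diff :: "(nat \<Rightarrow> nat \<Rightarrow> bool) \<Rightarrow> nat \<Rightarrow> nat \<Rightarrow> bool \<Rightarrow> nat" where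
  "above_diff blue i l c = card {i'. 1 \<le> i' \<and> i' < i \<and> blue i' l \<noteq> c}"

end

theory Submission
  imports Defs
begin


definition cnt :: "(nat \<Rightarrow> nat \<Rightarrow> bool) \<Rightarrow> nat \<Rightarrow> nat \<Rightarrow> nat \<Rightarrow> bool \<Rightarrow> nat" where
  "cnt B T u v c = (\<Sum>w\<in>{1..<u}. of_bool (B w v \<noteq> c)) + (if B u v = c then v - u - 1 else 0)
     + (\<Sum>w\<in>{v<..T}. of_bool (B u w \<noteq> c))"

lemma sum_bool_compl:
  assumes "finite A"
  shows "(\<Sum>w\<in>A. of_bool (P w \<noteq> c)) + (\<Sum>w\<in>A. of_bool (P w \<noteq> (\<not> c))) = (card A :: nat)"
proof -
  have "(\<Sum>w\<in>A. of_bool (P w \<noteq> c)) + (\<Sum>w\<in>A. of_bool (P w \<noteq> (\<not> c))) = (\<Sum>w\<in>A. (1::nat))"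
    by (subst sum.distrib[symmetric]) (rule sum.cong, auto)
  then show ?thesis by simp
qed

lemma cnt_compl:
  assumes "1 \<le> u" "u < v" "v \<le> T"
  shows "cnt B T u v c + cnt B T u v (\<not> c) = T - 2"
proof -
  have a: "(\<Sum>w\<in>{1..<u}. of_bool (B w v \<noteq> c)) + (\<Sum>w\<in>{1..<u}. of_bool (B w v \<noteq> (\<not>c))) = (u - 1::nat)"
    using sum_bool_compl[of "{1..<u}" "\<lambda>w. B w v" c] by simp
  have b: "(\<Sum>w\<in>{v<..T}. of_bool (B u w \<noteq> c)) + (\<Sum>w\<in>{v<..T}. of_bool (B u w \<noteq> (\<not>c))) = (T - v::nat)"
    using sum_bool_compl[of "{v<..T}" "\<lambda>w. B u w" c] by simp
  show ?thesis unfolding cnt_def using a b assms by auto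
qed

lemma cnt_ext:
  assumes "v \<le> T"
  shows "cnt B (Suc T) u v c = cnt B T u v c + of_bool (B u (Suc T) \<noteq> c)"
proof -
  have "{v<..Suc T} = insert (Suc T) {v<..T}" using assms by auto
  then show ?thesis unfolding cnt_def by simp
qed



lemma crossings_sigma:
  "crossings T B = (\<Sum>i\<in>{1..T}. \<Sum>j\<in>{i<..T}. \<Sum>k\<in>{i<..<j}. card {l\<in>{j<..T}. B i j = B k l})"
proof -
  have "{(i, j, k, l). 1 \<le> i \<and> i < k \<and> k < j \<and> j < l \<and> l \<le> T \<and> B i j = B k l}
    = Sigma {1..T} (\<lambda>i. Sigma {i<..T} (\<lambda>j. Sigma {i<..<j} (\<lambda>k. {l\<in>{j<..T}. B i j = B k l})))"
    by auto
  then have "crossings T B = card (Sigma {1..T} (\<lambda>i. Sigma {i<..T} (\<lambda>j. Sigma {i<..<j} (\<lambda>k. {l\<in>{j<..T}. B i j = B k l}))))"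
    unfolding crossings_def by simp
  also have "\<dots> = (\<Sum>i\<in>{1..T}. card (Sigma {i<..T} (\<lambda>j. Sigma {i<..<j} (\<lambda>k. {l\<in>{j<..T}. B i j = B k l}))))"
    by (rule card_SigmaI) auto
  also have "\<dots> = (\<Sum>i\<in>{1..T}. \<Sum>j\<in>{i<..T}. card (Sigma {i<..<j} (\<lambda>k. {l\<in>{j<..T}. B i j = B k l})))"
    by (rule sum.cong, simp, rule card_SigmaI) auto
  also have "\<dots> = (\<Sum>i\<in>{1..T}. \<Sum>j\<in>{i<..T}. \<Sum>k\<in>{i<..<j}. card {l\<in>{j<..T}. B i j = B k l})"
    by (rule sum.cong, simp, rule sum.cong, simp, rule card_SigmaI) auto
  finally show ?thesis .
qed

definition Dlt :: "(nat \<Rightarrow> nat \<Rightarrow> bool) \<Rightarrow> nat \<Rightarrow> nat" where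
  "Dlt B T = (\<Sum>i\<in>{1..T}. \<Sum>j\<in>{i<..T}. \<Sum>k\<in>{i<..<j}. of_bool (B i j = B k (Suc T)))"

lemma card_l_step:
  assumes "j \<le> T"
  shows "card {l\<in>{j<..Suc T}. P l} = card {l\<in>{j<..T}. P l} + of_bool (P (Suc T))"
proof -
  have "{l\<in>{j<..Suc T}. P l} = (if P (Suc T) then insert (Suc T) {l\<in>{j<..T}. P l} else {l\<in>{j<..T}. P l})"
    using assms by (auto simp: le_Suc_eq)
  then show ?thesis by simp
qed

lemma crossings_step: "crossings (Suc T) B = crossings T B + Dlt B T"
proof -
  let ?F = "\<lambda>T i j k. card {l\<in>{j<..T}. B i j = B k l}"
  have "crossings (Suc T) B = (\<Sum>i\<in>{1..Suc T}. \<Sum>j\<in>{i<..Suc T}. \<Sum>k\<in>{i<..<j}. ?F (Suc T) i j k)"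
    by (rule crossings_sigma)
  also have "\<dots> = (\<Sum>i\<in>{1..T}. \<Sum>j\<in>{i<..Suc T}. \<Sum>k\<in>{i<..<j}. ?F (Suc T) i j k)"
    by (cases "T = 0") (auto simp: atLeastAtMostSuc_conv)
  also have "\<dots> = (\<Sum>i\<in>{1..T}. \<Sum>j\<in>{i<..T}. \<Sum>k\<in>{i<..<j}. ?F (Suc T) i j k)"
  proof (rule sum.cong)
    fix i assume i: "i \<in> {1..T}"
    have "{i<..Suc T} = insert (Suc T) {i<..T}" using i by auto
    then show "(\<Sum>j\<in>{i<..Suc T}. \<Sum>k\<in>{i<..<j}. ?F (Suc T) i j k) = (\<Sum>j\<in>{i<..T}. \<Sum>k\<in>{i<..<j}. ?F (Suc T) i j k)"
      by simp
  qed simp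
  also have "\<dots> = (\<Sum>i\<in>{1..T}. \<Sum>j\<in>{i<..T}. \<Sum>k\<in>{i<..<j}. ?F T i j k + of_bool (B i j = B k (Suc T)))"
  proof (intro sum.cong refl)
    fix i j k assume "j \<in> {i<..T}"
    then show "?F (Suc T) i j k = ?F T i j k + of_bool (B i j = B k (Suc T))"
      using card_l_step[of j T "\<lambda>l. B i j = B k l"] by simp
  qed
  also have "\<dots> = crossings T B + Dlt B T"
    unfolding crossings_sigma Dlt_def by (simp add: sum.distrib)
  finally show ?thesis .
qed



lemma sum_swap_tri:
  fixes a b :: nat shows "(\<Sum>u\<in>{a..<b}. \<Sum>v\<in>{u<..<b}. F u v) = (\<Sum>v\<in>{a..<b}. \<Sum>u\<in>{a..<v}. (F u v :: nat))"
proof (induction b)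
  case 0
  then show ?case by simp
next
  case (Suc b)
  show ?case
  proof (cases "a \<le> b")
    case True
    have L: "(\<Sum>u\<in>{a..<Suc b}. \<Sum>v\<in>{u<..<Suc b}. F u v) = (\<Sum>u\<in>{a..<b}. \<Sum>v\<in>{u<..<Suc b}. F u v)"
      using True by (simp add: atLeastLessThanSuc)
    also have "\<dots> = (\<Sum>u\<in>{a..<b}. (\<Sum>v\<in>{u<..<b}. F u v) + F u b)"
    proof (rule sum.cong)
      fix u assume "u \<in> {a..<b}"
      then have "{u<..<Suc b} = insert b {u<..<b}" by auto
      then show "(\<Sum>v\<in>{u<..<Suc b}. F u v) = (\<Sum>v\<in>{u<..<b}. F u v) + F u b" by simp
    qed simp
    also have "\<dots> = (\<Sum>v\<in>{a..<b}. \<Sum>u\<in>{a..<v}. F u v) + (\<Sum>u\<in>{a..<b}. F u b)"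
      by (simp add: sum.distrib Suc.IH)
    also have "\<dots> = (\<Sum>v\<in>{a..<Suc b}. \<Sum>u\<in>{a..<v}. F u v)"
      using True by (simp add: atLeastLessThanSuc)
    finally show ?thesis .
  next
    case False
    then show ?thesis by simp
  qed
qed

definition tri :: "nat \<Rightarrow> nat" where
  "tri T = (\<Sum>u\<in>{1..T}. \<Sum>v\<in>{u<..T}. v - u - 1)"

lemma opp_split:
  "(\<Sum>u\<in>{1..T}. \<Sum>v\<in>{u<..T}. cnt B T u v (B u (Suc T))) =
    (\<Sum>u\<in>{1..T}. \<Sum>v\<in>{u<..T}. \<Sum>w\<in>{1..<u}. of_bool (B w v \<noteq> B u (Suc T)))
  + (\<Sum>u\<in>{1..T}. \<Sum>v\<in>{u<..T}. (if B u v = B u (Suc T) then v - u - 1 else 0))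
  + (\<Sum>u\<in>{1..T}. \<Sum>v\<in>{u<..T}. \<Sum>w\<in>{v<..T}. of_bool (B u w \<noteq> B u (Suc T)))"
  unfolding cnt_def by (simp add: sum.distrib)

lemma ivl_conv1: fixes T u :: nat shows "{1..T} = {1..<Suc T}" "{u<..T} = {u<..<Suc T}" by auto

lemma partA:
  fixes T :: nat shows "(\<Sum>u\<in>{1..T}. \<Sum>v\<in>{u<..T}. \<Sum>w\<in>{1..<u}. g w u v) =
   (\<Sum>w\<in>{1..T}. \<Sum>v\<in>{w<..T}. \<Sum>u\<in>{w<..<v}. (g w u v :: nat))"
proof -
  have "(\<Sum>u\<in>{1..T}. \<Sum>v\<in>{u<..T}. \<Sum>w\<in>{1..<u}. g w u v)
      = (\<Sum>u\<in>{1..<Suc T}. \<Sum>v\<in>{u<..<Suc T}. \<Sum>w\<in>{1..<u}. g w u v)"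
    by (simp only: ivl_conv1)
  also have "\<dots> = (\<Sum>v\<in>{1..<Suc T}. \<Sum>u\<in>{1..<v}. \<Sum>w\<in>{1..<u}. g w u v)"
    by (rule sum_swap_tri)
  also have "\<dots> = (\<Sum>v\<in>{1..<Suc T}. \<Sum>w\<in>{1..<v}. \<Sum>u\<in>{w<..<v}. g w u v)"
    by (rule sum.cong[OF refl], rule sum_swap_tri[symmetric])
  also have "\<dots> = (\<Sum>w\<in>{1..<Suc T}. \<Sum>v\<in>{w<..<Suc T}. \<Sum>u\<in>{w<..<v}. g w u v)"
    by (rule sum_swap_tri[symmetric])
  also have "\<dots> = (\<Sum>w\<in>{1..T}. \<Sum>v\<in>{w<..T}. \<Sum>u\<in>{w<..<v}. g w u v)"
    by (simp only: ivl_conv1)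
  finally show ?thesis .
qed

lemma partT:
  fixes T u :: nat shows "(\<Sum>v\<in>{u<..T}. \<Sum>w\<in>{v<..T}. h w) = (\<Sum>w\<in>{u<..T}. (w - u - 1) * (h w :: nat))"
proof -
  have e: "\<And>x. {x<..T} = {Suc x..<Suc T}" by auto
  have e2: "\<And>x. {x<..T} = {x<..<Suc T}" by auto
  have "(\<Sum>v\<in>{u<..T}. \<Sum>w\<in>{v<..T}. h w) = (\<Sum>v\<in>{Suc u..<Suc T}. \<Sum>w\<in>{v<..<Suc T}. h w)"
    by (simp only: e2, simp only: e[of u] e2[symmetric])
  also have "\<dots> = (\<Sum>w\<in>{Suc u..<Suc T}. \<Sum>v\<in>{Suc u..<w}. h w)"
    by (rule sum_swap_tri)
  also have "\<dots> = (\<Sum>w\<in>{u<..T}. (w - u - 1) * h w)"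
    by (simp add: e)
  finally show ?thesis .
qed

lemma triple_identity:
  "Dlt B T + (\<Sum>u\<in>{1..T}. \<Sum>v\<in>{u<..T}. cnt B T u v (B u (Suc T))) = 2 * tri T"
proof -
  let ?x = "\<lambda>u. B u (Suc T)"
  have A: "(\<Sum>u\<in>{1..T}. \<Sum>v\<in>{u<..T}. \<Sum>w\<in>{1..<u}. of_bool (B w v \<noteq> ?x u)::nat)
     = (\<Sum>w\<in>{1..T}. \<Sum>v\<in>{w<..T}. \<Sum>u\<in>{w<..<v}. of_bool (B w v \<noteq> ?x u))"
    by (rule partA)
  have DA: "Dlt B T + (\<Sum>w\<in>{1..T}. \<Sum>v\<in>{w<..T}. \<Sum>u\<in>{w<..<v}. of_bool (B w v \<noteq> ?x u)) = tri T"
  proof -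
    have inner: "\<And>w v. (\<Sum>u\<in>{w<..<v}. of_bool (B w v = ?x u) + of_bool (B w v \<noteq> ?x u)) = (v - w - 1::nat)"
    proof -
      fix w v :: nat
      have "(\<Sum>u\<in>{w<..<v}. of_bool (B w v = ?x u) + of_bool (B w v \<noteq> ?x u)) = (\<Sum>u\<in>{w<..<v}. (1::nat))"
        by (rule sum.cong) auto
      then show "(\<Sum>u\<in>{w<..<v}. of_bool (B w v = ?x u) + of_bool (B w v \<noteq> ?x u)) = (v - w - 1::nat)" by simp
    qed
    show ?thesis unfolding Dlt_def tri_def
      by (simp only: sum.distrib[symmetric] inner)
  qed
  have Tt: "(\<Sum>u\<in>{1..T}. \<Sum>v\<in>{u<..T}. \<Sum>w\<in>{v<..T}. of_bool (B u w \<noteq> ?x u))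
     = (\<Sum>u\<in>{1..T}. \<Sum>w\<in>{u<..T}. (w - u - 1) * of_bool (B u w \<noteq> ?x u))"
    by (rule sum.cong[OF refl], rule partT)
  have MT: "(\<Sum>u\<in>{1..T}. \<Sum>v\<in>{u<..T}. (if B u v = ?x u then v - u - 1 else 0))
      + (\<Sum>u\<in>{1..T}. \<Sum>w\<in>{u<..T}. (w - u - 1) * of_bool (B u w \<noteq> ?x u)) = tri T"
    unfolding tri_def sum.distrib[symmetric]
    by (intro sum.cong refl) auto
  show ?thesis using A DA Tt MT opp_split[of B T] by simp
qed



lemma col_sum:
  fixes x :: "nat \<Rightarrow> bool" and \<phi> \<psi> :: "nat \<Rightarrow> nat"
  defines "p \<equiv> \<lambda>u. (\<Sum>w\<in>{1..<u}. of_bool (x w) :: nat)"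
      and "r \<equiv> \<lambda>u. (\<Sum>w\<in>{1..<u}. of_bool (\<not> x w) :: nat)"
  shows "(\<Sum>u\<in>{1..m}. if x u then \<phi> (p u) else \<psi> (r u)) = (\<Sum>s<p (Suc m). \<phi> s) + (\<Sum>s<r (Suc m). \<psi> s)"
proof (induction m)
  case 0
  then show ?case by (simp add: p_def r_def)
next
  case (Suc m)
  have pS: "p (Suc (Suc m)) = p (Suc m) + of_bool (x (Suc m))"
    unfolding p_def by (simp add: atLeastLessThanSuc)
  have rS: "r (Suc (Suc m)) = r (Suc m) + of_bool (\<not> x (Suc m))"
    unfolding r_def by (simp add: atLeastLessThanSuc)
  have "(\<Sum>u\<in>{1..Suc m}. if x u then \<phi> (p u) else \<psi> (r u))
      = (\<Sum>u\<in>{1..m}. if x u then \<phi> (p u) else \<psi> (r u)) + (if x (Suc m) then \<phi> (p (Suc m)) else \<psi> (r (Suc m)))"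
    by (simp add: atLeastAtMostSuc_conv)
  then show ?case using Suc.IH pS rS by auto
qed

lemma sum_rev_part:
  fixes \<phi> :: "nat \<Rightarrow> nat"
  assumes "b + r = T"
  shows "(\<Sum>s<r. \<phi> (T - 1 - s)) = (\<Sum>s\<in>{b..<T}. \<phi> s)"
  by (rule sum.reindex_bij_witness[where i="\<lambda>s. T - 1 - s" and j="\<lambda>s. T - 1 - s"]) (use assms in auto)

lemma sum_split_at:
  fixes \<phi> :: "nat \<Rightarrow> nat"
  assumes "b \<le> T"
  shows "(\<Sum>s<b. \<phi> s) + (\<Sum>s\<in>{b..<T}. \<phi> s) = (\<Sum>s<T. \<phi> s)"
proof -
  have "{..<T} = {..<b} \<union> {b..<T}" using assms by auto
  moreover have "{..<b} \<inter> {b..<T} = {}" by auto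
  ultimately show ?thesis by (simp add: sum.union_disjoint)
qed

lemma edge_new_sum:
  fixes \<phi> :: "nat \<Rightarrow> nat"
  shows "(\<Sum>u\<in>{1..T}. \<phi> (cnt B (Suc T) u (Suc T) False)) = (\<Sum>s<T. \<phi> s)"
proof -
  let ?x = "\<lambda>w. B w (Suc T)"
  define p where "p = (\<lambda>u. (\<Sum>w\<in>{1..<u}. of_bool (?x w) :: nat))"
  define r where "r = (\<lambda>u. (\<Sum>w\<in>{1..<u}. of_bool (\<not> ?x w) :: nat))"
  have pr: "\<And>u. p u + r u = u - 1"
  proof -
    fix u
    have "p u + r u = (\<Sum>w\<in>{1..<u}. (1::nat))"
      unfolding p_def r_def sum.distrib[symmetric] by (rule sum.cong) auto
    then show "p u + r u = u - 1" by simp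
  qed
  have c0: "\<And>u. u \<in> {1..T} \<Longrightarrow> cnt B (Suc T) u (Suc T) False = (if ?x u then p u else T - 1 - r u)"
  proof -
    fix u assume u: "u \<in> {1..T}"
    have "cnt B (Suc T) u (Suc T) False = p u + (if ?x u then 0 else T - u)"
      unfolding cnt_def p_def by simp
    then show "cnt B (Suc T) u (Suc T) False = (if ?x u then p u else T - 1 - r u)"
      using pr[of u] u by auto
  qed
  have "(\<Sum>u\<in>{1..T}. \<phi> (cnt B (Suc T) u (Suc T) False))
      = (\<Sum>u\<in>{1..T}. if ?x u then \<phi> (p u) else (\<lambda>s. \<phi> (T - 1 - s)) (r u))"
    by (rule sum.cong) (auto simp: c0)
  also have "\<dots> = (\<Sum>s<p (Suc T). \<phi> s) + (\<Sum>s<r (Suc T). \<phi> (T - 1 - s))"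
    unfolding p_def r_def by (rule col_sum)
  also have "\<dots> = (\<Sum>s<p (Suc T). \<phi> s) + (\<Sum>s\<in>{p (Suc T)..<T}. \<phi> s)"
    using sum_rev_part[of "p (Suc T)" "r (Suc T)" T \<phi>] pr[of "Suc T"] by simp
  also have "\<dots> = (\<Sum>s<T. \<phi> s)"
    using pr[of "Suc T"] by (intro sum_split_at) simp
  finally show ?thesis .
qed

lemma cnt_new_True:
  assumes "1 \<le> u" "u \<le> T"
  shows "cnt B (Suc T) u (Suc T) True = T - 1 - cnt B (Suc T) u (Suc T) False"
  using cnt_compl[of u "Suc T" "Suc T" B False] assms by simp



lemma tri_choose: "tri T = T choose 3"
proof (induction T)
  case 0
  then show ?case by (simp add: tri_def)
next
  case (Suc T)
  have a: "tri (Suc T) = tri T + (\<Sum>u\<in>{1..T}. T - u)"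
  proof -
    have "tri (Suc T) = (\<Sum>u\<in>{1..T}. \<Sum>v\<in>{u<..Suc T}. v - u - 1)"
      unfolding tri_def by (simp add: atLeastAtMostSuc_conv)
    also have "\<dots> = (\<Sum>u\<in>{1..T}. (\<Sum>v\<in>{u<..T}. v - u - 1) + (T - u))"
    proof (rule sum.cong)
      fix u assume "u \<in> {1..T}"
      then have "{u<..Suc T} = insert (Suc T) {u<..T}" by auto
      then show "(\<Sum>v\<in>{u<..Suc T}. v - u - 1) = (\<Sum>v\<in>{u<..T}. v - u - 1) + (T - u)" by simp
    qed simp
    also have "\<dots> = (\<Sum>u\<in>{1..T}. \<Sum>v\<in>{u<..T}. v - u - 1) + (\<Sum>u\<in>{1..T}. T - u)"
      by (rule sum.distrib)
    finally show ?thesis unfolding tri_def .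
  qed
  have b: "(\<Sum>u\<in>{1..T}. T - u) = T choose 2"
  proof (induction T)
    case 0
    then show ?case by simp
  next
    case (Suc T)
    have "(\<Sum>u\<in>{1..Suc T}. Suc T - u) = (\<Sum>u\<in>{1..T}. Suc (T - u))"
      by (simp add: atLeastAtMostSuc_conv Suc_diff_le)
    also have "\<dots> = (\<Sum>u\<in>{1..T}. (T - u) + 1)" by simp
    also have "\<dots> = (\<Sum>u\<in>{1..T}. T - u) + T" by (simp only: sum.distrib) simp
    finally show ?case using Suc.IH by (simp add: numeral_2_eq_2)
  qed
  show ?case using a b Suc.IH by (simp add: numeral_3_eq_3 numeral_2_eq_2)
qed

lemma sum_lt_choose2: "(\<Sum>s<T. s) = T choose 2"
  by (induction T) (simp_all add: numeral_2_eq_2)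

lemma sum_s_choose: "(\<Sum>s<T. s * (T - 1 - s)) = T choose 3"
proof (induction T)
  case 0
  then show ?case by simp
next
  case (Suc T)
  have "(\<Sum>s<Suc T. s * (Suc T - 1 - s)) = (\<Sum>s<T. s * (T - 1 - s) + s)"
  proof -
    have "(\<Sum>s<Suc T. s * (Suc T - 1 - s)) = (\<Sum>s<T. s * (T - s))" by simp
    also have "\<dots> = (\<Sum>s<T. s * (T - 1 - s) + s)"
    proof (rule sum.cong)
      fix s assume "s \<in> {..<T}"
      then have "T - s = Suc (T - 1 - s)" by auto
      then show "s * (T - s) = s * (T - 1 - s) + s" by simp
    qed simp
    finally show ?thesis .
  qed
  also have "\<dots> = (T choose 3) + (\<Sum>s<T. s)" using Suc.IH by (simp add: sum.distrib)
  also have "(\<Sum>s<T. s) = T choose 2" by (rule sum_lt_choose2)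
  finally show ?case by (simp add: numeral_3_eq_3 numeral_2_eq_2)
qed



definition Phi :: "(nat \<Rightarrow> nat \<Rightarrow> bool) \<Rightarrow> nat \<Rightarrow> nat" where
  "Phi B T = (\<Sum>u\<in>{1..T}. \<Sum>v\<in>{u<..T}. cnt B T u v False * cnt B T u v True)"

lemma Phi_step:
  "Phi B (Suc T) = Phi B T + (\<Sum>u\<in>{1..T}. \<Sum>v\<in>{u<..T}. cnt B T u v (B u (Suc T))) + (T choose 3)"
proof -
  have "Phi B (Suc T) = (\<Sum>u\<in>{1..T}. \<Sum>v\<in>{u<..Suc T}. cnt B (Suc T) u v False * cnt B (Suc T) u v True)"
    unfolding Phi_def by (simp add: atLeastAtMostSuc_conv)
  also have "\<dots> = (\<Sum>u\<in>{1..T}. (\<Sum>v\<in>{u<..T}. cnt B T u v False * cnt B T u v True + cnt B T u v (B u (Suc T)))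
        + cnt B (Suc T) u (Suc T) False * cnt B (Suc T) u (Suc T) True)"
  proof (rule sum.cong[OF refl])
    fix u assume u: "u \<in> {1..T}"
    then have e: "{u<..Suc T} = insert (Suc T) {u<..T}" by auto
    have "\<And>v. v \<in> {u<..T} \<Longrightarrow> cnt B (Suc T) u v False * cnt B (Suc T) u v True
        = cnt B T u v False * cnt B T u v True + cnt B T u v (B u (Suc T))"
      by (simp add: cnt_ext)
    then show "(\<Sum>v\<in>{u<..Suc T}. cnt B (Suc T) u v False * cnt B (Suc T) u v True) =
      (\<Sum>v\<in>{u<..T}. cnt B T u v False * cnt B T u v True + cnt B T u v (B u (Suc T))) +
      cnt B (Suc T) u (Suc T) False * cnt B (Suc T) u (Suc T) True"
      using e by simp
  qed
  also have "\<dots> = Phi B T + (\<Sum>u\<in>{1..T}. \<Sum>v\<in>{u<..T}. cnt B T u v (B u (Suc T)))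
      + (\<Sum>u\<in>{1..T}. cnt B (Suc T) u (Suc T) False * cnt B (Suc T) u (Suc T) True)"
    unfolding Phi_def by (simp add: sum.distrib)
  also have "(\<Sum>u\<in>{1..T}. cnt B (Suc T) u (Suc T) False * cnt B (Suc T) u (Suc T) True)
      = (\<Sum>u\<in>{1..T}. (\<lambda>s. s * (T - 1 - s)) (cnt B (Suc T) u (Suc T) False))"
    by (rule sum.cong) (auto simp: cnt_new_True)
  also have "\<dots> = (\<Sum>s<T. s * (T - 1 - s))" by (rule edge_new_sum)
  also have "\<dots> = T choose 3" by (rule sum_s_choose)
  finally show ?thesis .
qed

lemma cross_Phi: "crossings T B + Phi B T = 3 * (T choose 4)"
proof (induction T)
  case 0
  then show ?case unfolding Phi_def crossings_sigma by simp
next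
  case (Suc T)
  have "crossings (Suc T) B + Phi B (Suc T) = (crossings T B + Phi B T) + 3 * (T choose 3)"
    using crossings_step[of T B] Phi_step[of B T] triple_identity[of B T] tri_choose[of T] by simp
  then show ?case using Suc.IH by (simp add: numeral_3_eq_3 numeral_2_eq_2 eval_nat_numeral)
qed



definition kap :: "(nat \<Rightarrow> nat \<Rightarrow> bool) \<Rightarrow> nat \<Rightarrow> nat \<Rightarrow> nat \<Rightarrow> nat" where
  "kap B T u v = min (cnt B T u v False) (cnt B T u v True)"

definition GG :: "(nat \<Rightarrow> nat \<Rightarrow> bool) \<Rightarrow> nat \<Rightarrow> nat \<Rightarrow> nat" where
  "GG B T k = (\<Sum>u\<in>{1..T}. \<Sum>v\<in>{u<..T}. k - kap B T u v)"

definition SS :: "(nat \<Rightarrow> nat \<Rightarrow> bool) \<Rightarrow> nat \<Rightarrow> nat \<Rightarrow> nat" where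
  "SS B T k = (\<Sum>u\<in>{1..T}. \<Sum>v\<in>{u<..T}. of_bool (cnt B T u v (B u (Suc T)) \<le> k))"

lemma kap_step:
  assumes "1 \<le> u" "u < v" "v \<le> T" "2 * k + 2 \<le> T"
  shows "Suc k - kap B (Suc T) u v = (k - kap B T u v) + of_bool (cnt B T u v (B u (Suc T)) \<le> k)"
proof -
  have c: "cnt B T u v False + cnt B T u v True = T - 2"
    using cnt_compl[of u v T B False] assms by simp
  show ?thesis
    unfolding kap_def using c assms cnt_ext[of v T B u False] cnt_ext[of v T B u True]
    by (cases "B u (Suc T)") auto
qed

lemma twice_sum_lt: "2 * (\<Sum>s<n. s) = n * (n - 1::nat)"
proof (induction n)
  case 0 then show ?case by simp
next
  case (Suc n) then show ?case by (cases n) (auto simp: algebra_simps)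
qed

lemma sum_Suc_k_minus:
  assumes "k + 1 \<le> T"
  shows "2 * (\<Sum>s<T. Suc k - s) = (k + 1) * (k + 2)"
proof -
  have "(\<Sum>s<T. Suc k - s) = (\<Sum>s<Suc k. Suc k - s) + (\<Sum>s\<in>{Suc k..<T}. Suc k - s)"
    using sum_split_at[of "Suc k" T "\<lambda>s. Suc k - s"] assms by simp
  also have "(\<Sum>s\<in>{Suc k..<T}. Suc k - s) = 0" by simp
  also have "(\<Sum>s<Suc k. Suc k - s) = (\<Sum>s<Suc k. (\<lambda>i. Suc i) (Suc k - Suc s))"
    by (rule sum.cong) auto
  also have "\<dots> = (\<Sum>s<Suc k. Suc s)" by (rule sum.nat_diff_reindex)
  also have "\<dots> = (\<Sum>s<Suc k. s + 1)" by simp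
  also have "\<dots> = (\<Sum>s<Suc k. s) + Suc k" by (simp only: sum.distrib) simp
  finally have "(\<Sum>s<T. Suc k - s) = (\<Sum>s<Suc k. s) + Suc k" by simp
  then have "2 * (\<Sum>s<T. Suc k - s) = Suc k * k + 2 * Suc k" using twice_sum_lt[of "Suc k"] by simp
  then show ?thesis by (simp add: algebra_simps)
qed

lemma edge_new_G:
  assumes "2 * k + 2 \<le> T"
  shows "(\<Sum>u\<in>{1..T}. Suc k - kap B (Suc T) u (Suc T)) = (k + 1) * (k + 2)"
proof -
  have "(\<Sum>u\<in>{1..T}. Suc k - kap B (Suc T) u (Suc T))
      = (\<Sum>u\<in>{1..T}. (\<lambda>s. Suc k - min s (T - 1 - s)) (cnt B (Suc T) u (Suc T) False))"
    by (rule sum.cong) (auto simp: kap_def cnt_new_True)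
  also have "\<dots> = (\<Sum>s<T. Suc k - min s (T - 1 - s))" by (rule edge_new_sum)
  also have "\<dots> = (\<Sum>s<T. (Suc k - s) + (Suc k - (T - Suc s)))"
    by (rule sum.cong) (use assms in auto)
  also have "\<dots> = (\<Sum>s<T. Suc k - s) + (\<Sum>s<T. (\<lambda>i. Suc k - i) (T - Suc s))"
    by (simp add: sum.distrib)
  also have "(\<Sum>s<T. (\<lambda>i. Suc k - i) (T - Suc s)) = (\<Sum>s<T. Suc k - s)"
    by (rule sum.nat_diff_reindex)
  finally have "(\<Sum>u\<in>{1..T}. Suc k - kap B (Suc T) u (Suc T)) = 2 * (\<Sum>s<T. Suc k - s)" by simp
  then show ?thesis using sum_Suc_k_minus[of k T] assms by simp
qed

lemma GG_step:
  assumes "2 * k + 2 \<le> T"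
  shows "GG B (Suc T) (Suc k) = (k + 1) * (k + 2) + GG B T k + SS B T k"
proof -
  have "GG B (Suc T) (Suc k) = (\<Sum>u\<in>{1..T}. \<Sum>v\<in>{u<..Suc T}. Suc k - kap B (Suc T) u v)"
    unfolding GG_def by (simp add: atLeastAtMostSuc_conv)
  also have "\<dots> = (\<Sum>u\<in>{1..T}. (\<Sum>v\<in>{u<..T}. (k - kap B T u v) + of_bool (cnt B T u v (B u (Suc T)) \<le> k))
        + (Suc k - kap B (Suc T) u (Suc T)))"
  proof (rule sum.cong[OF refl])
    fix u assume u: "u \<in> {1..T}"
    then have e: "{u<..Suc T} = insert (Suc T) {u<..T}" by auto
    have "\<And>v. v \<in> {u<..T} \<Longrightarrow> Suc k - kap B (Suc T) u v = (k - kap B T u v) + of_bool (cnt B T u v (B u (Suc T)) \<le> k)"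
      using kap_step[of u _ T k B] u assms by auto
    then show "(\<Sum>v\<in>{u<..Suc T}. Suc k - kap B (Suc T) u v) =
        (\<Sum>v\<in>{u<..T}. (k - kap B T u v) + of_bool (cnt B T u v (B u (Suc T)) \<le> k))
        + (Suc k - kap B (Suc T) u (Suc T))"
      using e by simp
  qed
  also have "\<dots> = GG B T k + SS B T k + (\<Sum>u\<in>{1..T}. Suc k - kap B (Suc T) u (Suc T))"
    unfolding GG_def SS_def by (simp add: sum.distrib)
  finally show ?thesis using edge_new_G[of k T B] assms by simp
qed



lemma strict_sorted_inj:
  assumes "sorted_wrt (<) (ys::nat list)" "a < length ys" "b < length ys" "ys ! a = ys ! b"
  shows "a = b"
proof (rule ccontr)
  assume "a \<noteq> b"
  then consider "a < b" | "b < a" by arith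
  then show False
    using sorted_wrt_nth_less[OF assms(1)] assms by cases force+
qed

lemma sorted_card_less:
  assumes "sorted_wrt (<) (ys::nat list)" "r < length ys"
  shows "card {w \<in> set ys. w < ys ! r} = r"
proof -
  have "{w \<in> set ys. w < ys ! r} = (!) ys ` {..<r}"
  proof
    show "{w \<in> set ys. w < ys ! r} \<subseteq> (!) ys ` {..<r}"
    proof
      fix w assume w: "w \<in> {w \<in> set ys. w < ys ! r}"
      then obtain q where q: "q < length ys" "w = ys ! q" by (auto simp: in_set_conv_nth)
      have "q < r"
      proof (rule ccontr)
        assume "\<not> q < r"
        then have "r = q \<or> r < q" by arith
        then have "ys ! r \<le> ys ! q" using sorted_wrt_nth_less[OF assms(1), of r q] q by auto
        then show False using w q by simp
      qed
      then show "w \<in> (!) ys ` {..<r}" using q by auto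
    qed
    show "(!) ys ` {..<r} \<subseteq> {w \<in> set ys. w < ys ! r}"
      using sorted_wrt_nth_less[OF assms(1)] assms(2) by auto
  qed
  moreover have "inj_on ((!) ys) {..<r}"
    using strict_sorted_inj[OF assms(1)] assms(2) by (auto simp: inj_on_def)
  ultimately show ?thesis by (simp add: card_image)
qed

lemma sorted_card_greater:
  assumes "sorted_wrt (<) (ys::nat list)" "r < length ys"
  shows "card {w \<in> set ys. ys ! r < w} = length ys - 1 - r"
proof -
  have "{w \<in> set ys. ys ! r < w} = (!) ys ` {r<..<length ys}"
  proof
    show "{w \<in> set ys. ys ! r < w} \<subseteq> (!) ys ` {r<..<length ys}"
    proof
      fix w assume w: "w \<in> {w \<in> set ys. ys ! r < w}"
      then obtain q where q: "q < length ys" "w = ys ! q" by (auto simp: in_set_conv_nth)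
      have "r < q"
      proof (rule ccontr)
        assume "\<not> r < q"
        then have "r = q \<or> q < r" by arith
        then have "ys ! q \<le> ys ! r" using sorted_wrt_nth_less[OF assms(1), of q r] assms(2) by auto
        then show False using w q by simp
      qed
      then show "w \<in> (!) ys ` {r<..<length ys}" using q by auto
    qed
    show "(!) ys ` {r<..<length ys} \<subseteq> {w \<in> set ys. ys ! r < w}"
      using sorted_wrt_nth_less[OF assms(1)] assms(2) by auto
  qed
  moreover have "inj_on ((!) ys) {r<..<length ys}"
    using strict_sorted_inj[OF assms(1)] by (auto simp: inj_on_def)
  ultimately show ?thesis by (simp add: card_image)
qed

lemma sum_bool_card: "finite A \<Longrightarrow> (\<Sum>x\<in>A. of_bool (P x) :: nat) = card {x \<in> A. P x}"
  by (simp add: sum_of_bool_eq Int_def conj_commute)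

definition idxf :: "(nat \<Rightarrow> nat \<Rightarrow> bool) \<Rightarrow> nat \<Rightarrow> nat \<Rightarrow> nat \<Rightarrow> nat" where
  "idxf B i j l = (if B i l = B i j then l - i - 1 else 0) + (\<Sum>w\<in>{l<..<j}. of_bool (B i w \<noteq> B i j))"

lemma assoc_basic:
  "distinct (assoc_order B i j) \<and> set (assoc_order B i j) = {i<..<j} \<and> length (assoc_order B i j) = j - i - 1"
proof -
  let ?P = "\<lambda>l. B i l \<noteq> B i j"
  have d: "distinct (assoc_order B i j)"
    unfolding assoc_order_def by (auto simp: distinct_filter)
  have s: "set (assoc_order B i j) = {i<..<j}"
    unfolding assoc_order_def by auto
  have "length (assoc_order B i j) = length (filter ?P [i+1..<j]) + length (filter (\<lambda>l. \<not> ?P l) [i+1..<j])"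
    unfolding assoc_order_def by (simp add: rev_filter[symmetric])
  also have "\<dots> = j - i - 1" using sum_length_filter_compl[of ?P "[i+1..<j]"] by simp
  finally show ?thesis using d s by simp
qed

lemma assoc_idx:
  assumes "p < length (assoc_order B i j)"
  shows "idxf B i j (assoc_order B i j ! p) = p"
proof -
  let ?c = "B i j"
  let ?P = "\<lambda>l. B i l \<noteq> ?c"
  let ?Q = "\<lambda>l. B i l = ?c"
  define ys where "ys = filter ?P [i+1..<j]"
  define zs where "zs = filter ?Q [i+1..<j]"
  have xs: "assoc_order B i j = rev ys @ zs"
    unfolding assoc_order_def ys_def zs_def by (simp add: rev_filter)
  have sys: "sorted_wrt (<) ys" unfolding ys_def by (simp add: sorted_wrt_filter)
  have szs: "sorted_wrt (<) zs" unfolding zs_def by (simp add: sorted_wrt_filter)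
  have setys: "set ys = {w. i < w \<and> w < j \<and> ?P w}" unfolding ys_def by auto
  have setzs: "set zs = {w. i < w \<and> w < j \<and> ?Q w}" unfolding zs_def by auto
  have cntP: "\<And>l. i < l \<Longrightarrow> (\<Sum>w\<in>{l<..<j}. of_bool (?P w) :: nat) = card {w \<in> set ys. l < w}"
  proof -
    fix l assume il: "i < l"
    have eq: "{w \<in> {l<..<j}. ?P w} = {w \<in> set ys. l < w}"
    proof (rule set_eqI)
      fix w show "w \<in> {w \<in> {l<..<j}. ?P w} \<longleftrightarrow> w \<in> {w \<in> set ys. l < w}"
        unfolding setys using il less_trans[of i l w] by (simp only: mem_Collect_eq greaterThanLessThan_iff) blast
    qed
    have "(\<Sum>w\<in>{l<..<j}. of_bool (?P w) :: nat) = card {w \<in> {l<..<j}. ?P w}"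
      by (rule sum_bool_card) simp
    then show "(\<Sum>w\<in>{l<..<j}. of_bool (?P w) :: nat) = card {w \<in> set ys. l < w}"
      using eq by simp
  qed
  show ?thesis
  proof (cases "p < length ys")
    case True
    define r where "r = length ys - 1 - p"
    have r: "r < length ys" unfolding r_def using True by simp
    have l: "assoc_order B i j ! p = ys ! r" unfolding xs r_def using True by (simp add: nth_append rev_nth)
    have inys: "ys ! r \<in> set ys" using r by simp
    then have Pl: "?P (ys ! r)" and il: "i < ys ! r" using setys by auto
    have "idxf B i j (ys ! r) = card {w \<in> set ys. ys ! r < w}"
      unfolding idxf_def using Pl cntP[OF il] by simp
    also have "\<dots> = p" using sorted_card_greater[OF sys r] r_def True by simp
    finally show ?thesis using l by simp
  next
    case False
    define r where "r = p - length ys"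
    have plen: "p < length ys + length zs" using assms xs by simp
    have r: "r < length zs" unfolding r_def using plen False by simp
    have l: "assoc_order B i j ! p = zs ! r" unfolding xs r_def using False by (simp add: nth_append)
    have "zs ! r \<in> set zs" using r by simp
    then have Ql: "?Q (zs ! r)" and il: "i < zs ! r" and lj: "zs ! r < j" using setzs by auto
    let ?l = "zs ! r"
    have a1: "card {w \<in> set zs. w < ?l} = r" by (rule sorted_card_less[OF szs r])
    have a2: "card {w \<in> set ys. w < ?l} + card {w \<in> set zs. w < ?l} = ?l - i - 1"
    proof -
      have "{w \<in> set ys. w < ?l} \<union> {w \<in> set zs. w < ?l} = {i<..<?l}"
      proof (rule set_eqI)
        fix w show "w \<in> {w \<in> set ys. w < ?l} \<union> {w \<in> set zs. w < ?l} \<longleftrightarrow> w \<in> {i<..<?l}"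
          unfolding setys setzs using lj less_trans[of w ?l j]
          by (simp only: mem_Collect_eq greaterThanLessThan_iff Un_iff) blast
      qed
      moreover have "{w \<in> set ys. w < ?l} \<inter> {w \<in> set zs. w < ?l} = {}"
        unfolding setys setzs by (simp only: mem_Collect_eq) blast
      ultimately have "card {w \<in> set ys. w < ?l} + card {w \<in> set zs. w < ?l} = card {i<..<?l}"
        by (metis (no_types, lifting) card_Un_disjoint finite_Un finite_greaterThanLessThan)
      then show ?thesis by simp
    qed
    have a3: "card {w \<in> set ys. w < ?l} + card {w \<in> set ys. ?l < w} = length ys"
    proof -
      have "{w \<in> set ys. w < ?l} \<union> {w \<in> set ys. ?l < w} = set ys"
      proof (rule set_eqI)
        fix w show "w \<in> {w \<in> set ys. w < ?l} \<union> {w \<in> set ys. ?l < w} \<longleftrightarrow> w \<in> set ys"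
          unfolding setys using Ql linorder_neqE_nat[of w ?l]
          by (simp only: mem_Collect_eq Un_iff) blast
      qed
      moreover have "{w \<in> set ys. w < ?l} \<inter> {w \<in> set ys. ?l < w} = {}" by auto
      ultimately have "card {w \<in> set ys. w < ?l} + card {w \<in> set ys. ?l < w} = card (set ys)"
        by (metis (no_types, lifting) card_Un_disjoint List.finite_set finite_Un)
      also have "card (set ys) = length ys" using sys by (simp add: distinct_card strict_sorted_iff)
      finally show ?thesis .
    qed
    have "idxf B i j ?l = (?l - i - 1) + card {w \<in> set ys. ?l < w}"
      unfolding idxf_def if_P[OF Ql] cntP[OF il] by (rule refl)
    also have "\<dots> = p" using a1 a2 a3 r_def False by (simp only:) arith
    finally show ?thesis using l by simp
  qed
qed



definition rowc :: "(nat \<Rightarrow> nat \<Rightarrow> bool) \<Rightarrow> nat \<Rightarrow> nat \<Rightarrow> nat \<Rightarrow> nat" where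
  "rowc B T k u = card {v \<in> {u<..T}. cnt B T u v (B u (Suc T)) \<le> k}"

lemma SS_rowc: "SS B T k = (\<Sum>u\<in>{1..T}. rowc B T k u)"
  unfolding SS_def rowc_def by (intro sum.cong refl sum_bool_card) simp

lemma cnt_split:
  assumes "u < v" "v \<le> T"
  shows "cnt B T u v (B u (Suc T)) = (\<Sum>w\<in>{1..<u}. of_bool (B w v \<noteq> B u (Suc T))) + idxf B u (Suc T) v"
proof -
  have "{v<..T} = {v<..<Suc T}" by auto
  then show ?thesis unfolding cnt_def idxf_def by simp
qed

lemma above_le: "(\<Sum>w\<in>{1..<u}. of_bool (P w) :: nat) \<le> u - 1"
proof -
  have "(\<Sum>w\<in>{1..<u}. of_bool (P w) :: nat) \<le> (\<Sum>w\<in>{1..<u}. 1)" by (rule sum_mono) simp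
  then show ?thesis by simp
qed

lemma row_lower_gen:
  assumes u: "1 \<le> u" "u \<le> T" and kT: "k + 2 \<le> T"
    and ex: "Q \<subseteq> {q. q < length (assoc_order B u (Suc T)) \<and> cnt B T u (assoc_order B u (Suc T) ! q) (B u (Suc T)) \<le> k}"
  shows "card ({..<k + 2 - u} \<union> Q) \<le> rowc B T k u"
proof -
  let ?xs = "assoc_order B u (Suc T)"
  have bas: "distinct ?xs" "set ?xs = {u<..<Suc T}" "length ?xs = T - u"
    using assoc_basic[of B u "Suc T"] by auto
  let ?I = "{..<k + 2 - u} \<union> Q"
  have Isub: "?I \<subseteq> {..<length ?xs}" using bas(3) kT ex by auto
  have inj: "inj_on ((!) ?xs) ?I"
  proof (rule inj_onI)
    fix x y assume "x \<in> ?I" "y \<in> ?I" "?xs ! x = ?xs ! y"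
    then show "x = y" using Isub bas(1) nth_eq_iff_index_eq[of ?xs x y] by auto
  qed
  have sub: "(!) ?xs ` ?I \<subseteq> {v \<in> {u<..T}. cnt B T u v (B u (Suc T)) \<le> k}"
  proof
    fix v assume "v \<in> (!) ?xs ` ?I"
    then obtain p where p: "p \<in> ?I" "v = ?xs ! p" by auto
    have plen: "p < length ?xs" using p Isub by auto
    then have vin: "v \<in> {u<..<Suc T}" using p bas(2) nth_mem by metis
    then have uv: "u < v" "v \<le> T" by auto
    have "cnt B T u v (B u (Suc T)) \<le> k"
    proof (cases "p \<in> Q")
      case True
      then show ?thesis using ex p by auto
    next
      case False
      then have pk: "p < k + 2 - u" using p by auto
      have "cnt B T u v (B u (Suc T)) = (\<Sum>w\<in>{1..<u}. of_bool (B w v \<noteq> B u (Suc T))) + p"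
        using cnt_split[OF uv, of B] assoc_idx[OF plen] p by simp
      also have "\<dots> \<le> (u - 1) + p" using above_le by simp
      finally show ?thesis using pk u by linarith
    qed
    then show "v \<in> {v \<in> {u<..T}. cnt B T u v (B u (Suc T)) \<le> k}" using uv by auto
  qed
  have "card ?I = card ((!) ?xs ` ?I)" using inj by (simp add: card_image)
  also have "\<dots> \<le> rowc B T k u" unfolding rowc_def by (rule card_mono) (use sub in auto)
  finally show ?thesis .
qed

lemma row_lower:
  assumes "1 \<le> u" "u \<le> T" "k + 2 \<le> T"
  shows "k + 2 - u \<le> rowc B T k u"
  using row_lower_gen[OF assms, of "{}"] by simp

lemma sum_shift1: "(\<Sum>u\<in>{1..T}. f u) = (\<Sum>s<T. f (Suc s) :: nat)"
  by (rule sum.reindex_bij_witness[where i=Suc and j="\<lambda>u. u - 1"]) auto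

lemma sum_lower_total:
  fixes k T :: nat
  assumes "k + 1 \<le> T"
  shows "2 * (\<Sum>u\<in>{1..T}. k + 2 - u) = (k + 1) * (k + 2)"
proof -
  have "(\<Sum>u\<in>{1..T}. k + 2 - u) = (\<Sum>s<T. k + 2 - Suc s)" by (rule sum_shift1)
  also have "\<dots> = (\<Sum>s<T. Suc k - s)" by simp
  finally have "(\<Sum>u\<in>{1..T}. k + 2 - u) = (\<Sum>s<T. Suc k - s)" .
  then show ?thesis using sum_Suc_k_minus[OF assms] by simp
qed

lemma SS_lower:
  assumes "2 * k + 2 \<le> T"
  shows "(k + 1) * (k + 2) \<le> 2 * SS B T k"
proof -
  have "(\<Sum>u\<in>{1..T}. k + 2 - u) \<le> (\<Sum>u\<in>{1..T}. rowc B T k u)"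
    by (rule sum_mono) (use row_lower assms in auto)
  then show ?thesis using sum_lower_total[of k T] assms SS_rowc[of B T k] by simp
qed

lemma SS_tight_row:
  assumes "2 * k + 2 \<le> T" "2 * SS B T k = (k + 1) * (k + 2)" "u \<in> {1..T}"
  shows "rowc B T k u = k + 2 - u"
proof (rule ccontr)
  assume ne: "rowc B T k u \<noteq> k + 2 - u"
  have le: "\<forall>x\<in>{1..T}. k + 2 - x \<le> rowc B T k x" using row_lower assms(1) by auto
  then have "k + 2 - u \<le> rowc B T k u" using assms(3) by blast
  then have "k + 2 - u < rowc B T k u" using ne by linarith
  then have "(\<Sum>u\<in>{1..T}. k + 2 - u) < (\<Sum>u\<in>{1..T}. rowc B T k u)"
    using le assms(3) by (intro sum_strict_mono_ex1) auto
  then show False using sum_lower_total[of k T] assms SS_rowc[of B T k] by simp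
qed

lemma tight_conseq:
  assumes "2 * k + 2 \<le> T" "2 * SS B T k = (k + 1) * (k + 2)" "1 \<le> u" "u \<le> T"
    and q: "q < length (assoc_order B u (Suc T))"
    and c: "cnt B T u (assoc_order B u (Suc T) ! q) (B u (Suc T)) \<le> k"
  shows "q < k + 2 - u"
proof (rule ccontr)
  assume nq: "\<not> q < k + 2 - u"
  have "card ({..<k + 2 - u} \<union> {q}) \<le> rowc B T k u"
    by (rule row_lower_gen) (use assms in auto)
  moreover have "card ({..<k + 2 - u} \<union> {q}) = Suc (k + 2 - u)" using nq by simp
  moreover have "rowc B T k u = k + 2 - u" using SS_tight_row assms by auto
  ultimately show False by simp
qed



lemma GG_zero: "GG B T 0 = 0" unfolding GG_def by simp

lemma GG_lower: "2 * k + 1 \<le> T \<Longrightarrow> k * (k + 1) * (k + 2) \<le> 2 * GG B T k"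
proof (induction k arbitrary: T)
  case 0
  then show ?case by simp
next
  case (Suc k)
  obtain T' where T: "T = Suc T'" using Suc.prems by (cases T) auto
  have h: "2 * k + 2 \<le> T'" using Suc.prems T by simp
  have "2 * GG B T (Suc k) = 2 * (k + 1) * (k + 2) + 2 * GG B T' k + 2 * SS B T' k"
    using GG_step[OF h, of B] T by simp
  moreover have "k * (k + 1) * (k + 2) \<le> 2 * GG B T' k" using Suc.IH[of T'] h by simp
  moreover have "(k + 1) * (k + 2) \<le> 2 * SS B T' k" using SS_lower[OF h] by simp
  ultimately show ?case by (simp add: algebra_simps)
qed

lemma GG_descent:
  assumes h: "2 * k + 2 \<le> T" and t: "2 * GG B (Suc T) (Suc k) = (k + 1) * (k + 2) * (k + 3)"
  shows "2 * GG B T k = k * (k + 1) * (k + 2) \<and> 2 * SS B T k = (k + 1) * (k + 2)"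
proof -
  have e: "2 * GG B (Suc T) (Suc k) = 2 * (k + 1) * (k + 2) + 2 * GG B T k + 2 * SS B T k"
    using GG_step[OF h, of B] by simp
  have a: "k * (k + 1) * (k + 2) \<le> 2 * GG B T k" using GG_lower[of k T B] h by simp
  have b: "(k + 1) * (k + 2) \<le> 2 * SS B T k" using SS_lower[OF h] by simp
  have s: "(k + 1) * (k + 2) * (k + 3) = 2 * (k + 1) * (k + 2) + k * (k + 1) * (k + 2) + (k + 1) * (k + 2)"
    by (simp add: algebra_simps)
  show ?thesis using e a b s t by linarith
qed

lemma twice_sum_tri: fixes q c :: nat shows "2 * (\<Sum>k<q. Suc k - c) = (q - c) * (q - c + 1)"
proof (induction q)
  case 0
  then show ?case by simp
next
  case (Suc q)
  have "2 * (\<Sum>k<Suc q. Suc k - c) = (q - c) * (q - c + 1) + 2 * (Suc q - c)"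
    using Suc.IH by simp
  also have "\<dots> = (Suc q - c) * (Suc q - c + 1)"
  proof (cases "c \<le> q")
    case True
    then obtain d where "q = c + d" by (metis le_add_diff_inverse)
    then show ?thesis by (simp add: algebra_simps Suc_diff_le)
  next
    case False
    then show ?thesis by simp
  qed
  finally show ?case .
qed

lemma edge_odd:
  fixes c0 c1 q :: nat
  assumes "c0 + c1 = 2 * q + 1"
  shows "c0 * c1 + (q - min c0 c1) * (q - min c0 c1 + 1) = q * (q + 1)"
proof -
  have key: "\<And>a b. a \<le> b \<Longrightarrow> a + b = 2 * q + 1 \<Longrightarrow> a * b + (q - a) * (q - a + 1) = q * (q + 1)"
  proof -
    fix a b :: nat assume ab: "a \<le> b" "a + b = 2 * q + 1"
    have "a \<le> q" using ab by linarith
    then obtain d where d: "q = a + d" by (metis le_add_diff_inverse)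
    then have b: "b = a + 2 * d + 1" using ab by simp
    show "a * b + (q - a) * (q - a + 1) = q * (q + 1)" using d b by (simp add: algebra_simps)
  qed
  show ?thesis
  proof (cases "c0 \<le> c1")
    case True
    then show ?thesis using key[of c0 c1] assms by (simp add: min_def)
  next
    case False
    then show ?thesis using key[of c1 c0] assms by (simp add: min_def mult.commute)
  qed
qed

lemma edge_even:
  fixes c0 c1 q :: nat
  assumes "c0 + c1 = 2 * q + 2"
  shows "c0 * c1 + (q - min c0 c1) * (q - min c0 c1 + 1) + (Suc q - min c0 c1) = (q + 1) * (q + 1)"
proof -
  have key: "\<And>a b. a \<le> b \<Longrightarrow> a + b = 2 * q + 2 \<Longrightarrow> a * b + (q - a) * (q - a + 1) + (Suc q - a) = (q + 1) * (q + 1)"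
  proof -
    fix a b :: nat assume ab: "a \<le> b" "a + b = 2 * q + 2"
    show "a * b + (q - a) * (q - a + 1) + (Suc q - a) = (q + 1) * (q + 1)"
    proof (cases "a = q + 1")
      case True
      then show ?thesis using ab by simp
    next
      case False
      then have "a \<le> q" using ab by linarith
      then obtain d where d: "q = a + d" by (metis le_add_diff_inverse)
      then have b: "b = a + 2 * d + 2" using ab by simp
      show ?thesis using d b by (simp add: algebra_simps Suc_diff_le)
    qed
  qed
  show ?thesis
  proof (cases "c0 \<le> c1")
    case True
    then show ?thesis using key[of c0 c1] assms by (simp add: min_def)
  next
    case False
    then show ?thesis using key[of c1 c0] assms by (simp add: min_def mult.commute)
  qed
qed



definition En :: "nat \<Rightarrow> nat" where "En n = (\<Sum>u\<in>{1..n}. \<Sum>v\<in>{u<..n}. (1::nat))"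

lemma GG_swap:
  "(\<Sum>k<q. 2 * GG B n (Suc k)) = (\<Sum>u\<in>{1..n}. \<Sum>v\<in>{u<..n}. 2 * (\<Sum>k<q. Suc k - kap B n u v))"
proof -
  have "(\<Sum>k<q. 2 * GG B n (Suc k)) = (\<Sum>k<q. \<Sum>u\<in>{1..n}. \<Sum>v\<in>{u<..n}. 2 * (Suc k - kap B n u v))"
    by (simp only: GG_def sum_distrib_left)
  also have "\<dots> = (\<Sum>u\<in>{1..n}. \<Sum>k<q. \<Sum>v\<in>{u<..n}. 2 * (Suc k - kap B n u v))"
    by (rule sum.swap)
  also have "\<dots> = (\<Sum>u\<in>{1..n}. \<Sum>v\<in>{u<..n}. \<Sum>k<q. 2 * (Suc k - kap B n u v))"
    by (rule sum.cong[OF refl], rule sum.swap)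
  also have "\<dots> = (\<Sum>u\<in>{1..n}. \<Sum>v\<in>{u<..n}. 2 * (\<Sum>k<q. Suc k - kap B n u v))"
    by (simp only: sum_distrib_left)
  finally show ?thesis .
qed

lemma Phi_GG_odd:
  assumes n: "n = 2 * q + 3"
  shows "Phi B n + (\<Sum>k<q. 2 * GG B n (Suc k)) = En n * (q * (q + 1))"
proof -
  have "Phi B n + (\<Sum>k<q. 2 * GG B n (Suc k))
      = (\<Sum>u\<in>{1..n}. \<Sum>v\<in>{u<..n}. cnt B n u v False * cnt B n u v True + 2 * (\<Sum>k<q. Suc k - kap B n u v))"
    unfolding GG_swap Phi_def by (simp add: sum.distrib)
  also have "\<dots> = (\<Sum>u\<in>{1..n}. \<Sum>v\<in>{u<..n}. q * (q + 1))"
  proof (intro sum.cong refl)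
    fix u v assume u: "u \<in> {1..n}" and v: "v \<in> {u<..n}"
    have c: "cnt B n u v False + cnt B n u v True = 2 * q + 1"
      using cnt_compl[of u v n B False] u v n by simp
    show "cnt B n u v False * cnt B n u v True + 2 * (\<Sum>k<q. Suc k - kap B n u v) = q * (q + 1)"
      unfolding twice_sum_tri kap_def using edge_odd[OF c] .
  qed
  also have "\<dots> = En n * (q * (q + 1))" unfolding En_def by (simp add: sum_distrib_right)
  finally show ?thesis .
qed

lemma Phi_GG_even:
  assumes n: "n = 2 * q + 4"
  shows "Phi B n + (\<Sum>k<q. 2 * GG B n (Suc k)) + GG B n (Suc q) = En n * ((q + 1) * (q + 1))"
proof -
  have "Phi B n + (\<Sum>k<q. 2 * GG B n (Suc k)) + GG B n (Suc q)
      = (\<Sum>u\<in>{1..n}. \<Sum>v\<in>{u<..n}. cnt B n u v False * cnt B n u v True + 2 * (\<Sum>k<q. Suc k - kap B n u v)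
           + (Suc q - kap B n u v))"
    unfolding GG_swap unfolding Phi_def GG_def by (simp add: sum.distrib)
  also have "\<dots> = (\<Sum>u\<in>{1..n}. \<Sum>v\<in>{u<..n}. (q + 1) * (q + 1))"
  proof (intro sum.cong refl)
    fix u v assume u: "u \<in> {1..n}" and v: "v \<in> {u<..n}"
    have c: "cnt B n u v False + cnt B n u v True = 2 * q + 2"
      using cnt_compl[of u v n B False] u v n by simp
    show "cnt B n u v False * cnt B n u v True + 2 * (\<Sum>k<q. Suc k - kap B n u v) + (Suc q - kap B n u v)
        = (q + 1) * (q + 1)"
      unfolding twice_sum_tri kap_def using edge_even[OF c] .
  qed
  also have "\<dots> = En n * ((q + 1) * (q + 1))" by (simp only: En_def sum_distrib_right mult_1)
  finally show ?thesis .
qed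

lemma En_eq: "2 * En n = n * (n - 1)"
proof (induction n)
  case 0
  then show ?case by (simp add: En_def)
next
  case (Suc n)
  have "En (Suc n) = (\<Sum>u\<in>{1..n}. \<Sum>v\<in>{u<..Suc n}. (1::nat))"
    unfolding En_def by (simp add: atLeastAtMostSuc_conv)
  also have "\<dots> = (\<Sum>u\<in>{1..n}. (\<Sum>v\<in>{u<..n}. (1::nat)) + 1)"
  proof (rule sum.cong[OF refl])
    fix u assume "u \<in> {1..n}"
    then have "{u<..Suc n} = insert (Suc n) {u<..n}" by auto
    then show "(\<Sum>v\<in>{u<..Suc n}. (1::nat)) = (\<Sum>v\<in>{u<..n}. (1::nat)) + 1" by simp
  qed
  also have "\<dots> = En n + n" unfolding En_def by (simp only: sum.distrib) simp
  finally show ?case using Suc.IH by (cases n) (auto simp: algebra_simps)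
qed

lemma choose2': "2 * ((m + 2) choose 2) = (m + 2) * (m + 1)"
proof (induction m)
  case 0 then show ?case by (simp add: numeral_2_eq_2)
next
  case (Suc m)
  have "Suc m + 2 choose 2 = (m + 2 choose 1) + (m + 2 choose 2)"
    by (simp add: numeral_2_eq_2)
  then show ?case using Suc.IH by (simp add: algebra_simps)
qed

lemma choose3': "6 * ((m + 3) choose 3) = (m + 3) * (m + 2) * (m + 1)"
proof (induction m)
  case 0 then show ?case by (simp add: numeral_3_eq_3)
next
  case (Suc m)
  have h1: "Suc m + 3 choose 3 = (m + 3 choose 2) + (m + 3 choose 3)"
    by (simp add: numeral_3_eq_3 numeral_2_eq_2)
  have e: "Suc m + 2 = m + 3" "Suc m + 1 = m + 2" by simp_all
  have h2: "2 * ((m + 3) choose 2) = (m + 3) * (m + 2)" by (rule choose2'[of "Suc m", unfolded e])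
  have "6 * (Suc m + 3 choose 3) = 3 * (2 * ((m + 3) choose 2)) + 6 * (m + 3 choose 3)"
    by (simp only: h1) simp
  also have "\<dots> = 3 * ((m + 3) * (m + 2)) + (m + 3) * (m + 2) * (m + 1)" by (simp only: h2 Suc.IH)
  finally show ?case by (simp add: algebra_simps)
qed

lemma choose4': "24 * ((m + 3) choose 4) = (m + 3) * (m + 2) * (m + 1) * m"
proof (induction m)
  case 0 then show ?case by (simp add: eval_nat_numeral)
next
  case (Suc m)
  have h1: "Suc m + 3 choose 4 = (m + 3 choose 3) + (m + 3 choose 4)"
    by (simp add: eval_nat_numeral)
  have "24 * (Suc m + 3 choose 4) = 4 * (6 * ((m + 3) choose 3)) + 24 * (m + 3 choose 4)"
    by (simp only: h1) simp
  also have "\<dots> = 4 * ((m + 3) * (m + 2) * (m + 1)) + (m + 3) * (m + 2) * (m + 1) * m"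
    by (simp only: choose3' Suc.IH)
  finally show ?case by (simp add: algebra_simps)
qed

lemma sum_cubes3: fixes q :: nat shows "4 * (\<Sum>k<q. (k + 1) * (k + 2) * (k + 3)) = q * (q + 1) * (q + 2) * (q + 3)"
  by (induction q) (simp_all add: algebra_simps)



lemma Z_odd: "4 * Z (2 * q + 3) = (q * (q + 1)) * (q * (q + 1))"
proof -
  have z: "Z (2 * q + 3) = ((q + 1) * (q + 1) * q * q) div 4" unfolding Z_def by simp
  have "even (q * (q + 1))" by simp
  then obtain t where t: "q * (q + 1) = 2 * t" by blast
  have "(q + 1) * (q + 1) * q * q = (q * (q + 1)) * (q * (q + 1))" by algebra
  also have "\<dots> = 4 * (t * t)" unfolding t by algebra
  finally have "Z (2 * q + 3) = t * t" using z by simp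
  then show ?thesis using t by algebra
qed

lemma Z_even: "4 * Z (2 * q + 4) = (q + 2) * (q + 1) * (q + 1) * q"
proof -
  have z: "Z (2 * q + 4) = ((q + 2) * (q + 1) * (q + 1) * q) div 4" unfolding Z_def by simp
  have "4 dvd ((q + 2) * (q + 1) * (q + 1) * q)"
  proof (cases "even q")
    case True
    then obtain t where t: "q = 2 * t" by blast
    show ?thesis
      by (rule dvdI[of _ _ "(t + 1) * (2 * t + 1) * (2 * t + 1) * t"]) (unfold t, algebra)
  next
    case False
    then obtain t where t: "q = 2 * t + 1" using oddE by blast
    show ?thesis
      by (rule dvdI[of _ _ "(2 * t + 3) * (t + 1) * (t + 1) * (2 * t + 1)"]) (unfold t, algebra)
  qed
  then show ?thesis using z by simp
qed

lemma sum_eq_from_ge: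
  fixes f g :: "nat \<Rightarrow> nat"
  assumes "\<And>k. k < q \<Longrightarrow> g k \<le> f k" "(\<Sum>k<q. f k) = (\<Sum>k<q. g k)" "k < q"
  shows "f k = g k"
proof (rule ccontr)
  assume "f k \<noteq> g k"
  then have "g k < f k" using assms(1)[OF assms(3)] by linarith
  then have "(\<Sum>k<q. g k) < (\<Sum>k<q. f k)"
    using assms by (intro sum_strict_mono_ex1) auto
  then show False using assms(2) by simp
qed

lemma arith_odd:
  fixes cr ph X c4 z w p1 p2 p3 p4 :: nat
  assumes "cr + ph = 3 * c4" "24 * c4 = p2" "ph + X = p1" "cr = z" "4 * z = p3" "4 * w = p4"
    "8 * p1 + 2 * p3 = 2 * p4 + p2"
  shows "X = w"
  using assms by linarith

lemma arith_even:
  fixes cr ph X Y c4 z w v p1 p2 p3 p4 :: nat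
  assumes "cr + ph = 3 * c4" "24 * c4 = p2" "ph + X + Y = p1" "cr = z" "4 * z = p3" "4 * w = p4"
    "8 * p1 + 2 * p3 = 2 * p4 + 4 * v + p2" "w \<le> X" "v \<le> 2 * Y"
  shows "X = w \<and> 2 * Y = v"
  using assms by linarith

lemma diff_conv: "(2 * q + 3) - 1 = 2 * q + 2" "(2 * q + 3) - 2 = 2 * q + 1" "(2 * q + 3) - 3 = 2 * q"
  "(2 * q + 4) - 1 = 2 * q + 3" "(2 * q + 4) - 2 = 2 * q + 2" "(2 * q + 4) - 3 = 2 * q + (1::nat)"
  by simp_all

lemma top_tight:
  assumes cr: "crossings n B = Z n" and k: "2 * k + 4 \<le> n"
  shows "2 * GG B n (Suc k) = (k + 1) * (k + 2) * (k + 3)"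
proof -
  define q where "q = (n - 3) div 2"
  let ?X = "\<Sum>k<q. 2 * GG B n (Suc k)"
  let ?W = "\<Sum>k<q. (k + 1) * (k + 2) * (k + 3)"
  have Xge: "\<And>k. k < q \<Longrightarrow> (k + 1) * (k + 2) * (k + 3) \<le> 2 * GG B n (Suc k)"
  proof -
    fix k assume "k < q"
    then have "2 * Suc k + 1 \<le> n" unfolding q_def by presburger
    then have "Suc k * (Suc k + 1) * (Suc k + 2) \<le> 2 * GG B n (Suc k)" by (rule GG_lower)
    moreover have "Suc k * (Suc k + 1) * (Suc k + 2) = (k + 1) * (k + 2) * (k + 3)" by (simp add: algebra_simps)
    ultimately show "(k + 1) * (k + 2) * (k + 3) \<le> 2 * GG B n (Suc k)" by simp
  qed
  have Wge: "?W \<le> ?X" using Xge by (intro sum_mono) auto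
  have c4: "24 * (n choose 4) = n * (n - 1) * (n - 2) * (n - 3)"
  proof -
    have e: "n - 3 + 3 = n" "n - 3 + 2 = n - 1" "n - 3 + 1 = n - 2" using k by auto
    show ?thesis using choose4'[of "n - 3", unfolded e] by (simp only: mult.assoc)
  qed
  have cp: "crossings n B + Phi B n = 3 * (n choose 4)" by (rule cross_Phi)
  have w4: "4 * ?W = q * (q + 1) * (q + 2) * (q + 3)" by (rule sum_cubes3)
  show ?thesis
  proof (cases "even n")
    case False
    then have n: "n = 2 * q + 3" unfolding q_def using k by presburger
    have "n * (n - 1) = 2 * ((2 * q + 3) * (q + 1))" unfolding n by (simp only: diff_conv) algebra
    then have "2 * En n = 2 * ((2 * q + 3) * (q + 1))" using En_eq[of n] by simp
    then have en: "En n = (2 * q + 3) * (q + 1)" by simp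
    have pg: "Phi B n + ?X = En n * (q * (q + 1))" by (rule Phi_GG_odd[OF n])
    have eq: "?X = ?W"
    proof (rule arith_odd[OF cp c4 pg cr Z_odd[of q, folded n] w4])
      show "8 * (En n * (q * (q + 1))) + 2 * (q * (q + 1) * (q * (q + 1))) =
        2 * (q * (q + 1) * (q + 2) * (q + 3)) + n * (n - 1) * (n - 2) * (n - 3)"
        unfolding en unfolding n by (simp only: diff_conv) algebra
    qed
    have kq: "k < q" using k n by linarith
    show ?thesis using sum_eq_from_ge[OF Xge eq kq] by simp
  next
    case True
    then have n: "n = 2 * q + 4" unfolding q_def using k by presburger
    have "n * (n - 1) = 2 * ((q + 2) * (2 * q + 3))" unfolding n by (simp only: diff_conv) algebra
    then have "2 * En n = 2 * ((q + 2) * (2 * q + 3))" using En_eq[of n] by simp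
    then have en: "En n = (q + 2) * (2 * q + 3)" by simp
    have pg: "Phi B n + ?X + GG B n (Suc q) = En n * ((q + 1) * (q + 1))" by (rule Phi_GG_even[OF n])
    have vge: "(q + 1) * (q + 2) * (q + 3) \<le> 2 * GG B n (Suc q)"
    proof -
      have "2 * Suc q + 1 \<le> n" using n by simp
      then have "Suc q * (Suc q + 1) * (Suc q + 2) \<le> 2 * GG B n (Suc q)" by (rule GG_lower)
      moreover have "Suc q * (Suc q + 1) * (Suc q + 2) = (q + 1) * (q + 2) * (q + 3)" by (simp add: algebra_simps)
      ultimately show ?thesis by simp
    qed
    have eq: "?X = ?W \<and> 2 * GG B n (Suc q) = (q + 1) * (q + 2) * (q + 3)"
    proof (rule arith_even[OF cp c4 pg cr Z_even[of q, folded n] w4 _ Wge vge])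
      show "8 * (En n * ((q + 1) * (q + 1))) + 2 * ((q + 2) * (q + 1) * (q + 1) * q) =
        2 * (q * (q + 1) * (q + 2) * (q + 3)) + 4 * ((q + 1) * (q + 2) * (q + 3)) + n * (n - 1) * (n - 2) * (n - 3)"
        unfolding en unfolding n by (simp only: diff_conv) algebra
    qed
    show ?thesis
    proof (cases "k < q")
      case True
      show ?thesis using sum_eq_from_ge[OF Xge conjunct1[OF eq] True] by simp
    next
      case False
      then have "k = q" using k n by linarith
      then show ?thesis using eq by simp
    qed
  qed
qed



lemma descent:
  assumes cr: "crossings n B = Z n"
  shows "2 * (k + s) + 4 \<le> n \<Longrightarrow> 2 * GG B (n - s) (Suc k) = (k + 1) * (k + 2) * (k + 3)"
proof (induction s arbitrary: k)
  case 0
  then show ?case using top_tight[OF cr, of k] by simp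
next
  case (Suc s)
  have ih: "2 * GG B (n - s) (Suc (Suc k)) = (Suc k + 1) * (Suc k + 2) * (Suc k + 3)"
    using Suc.IH[of "Suc k"] Suc.prems by simp
  have ns: "n - s = Suc (n - Suc s)" using Suc.prems by simp
  have h: "2 * Suc k + 2 \<le> n - Suc s" using Suc.prems by simp
  have "2 * GG B (n - Suc s) (Suc k) = Suc k * (Suc k + 1) * (Suc k + 2)"
    using GG_descent[OF h, of B] ih ns by simp
  moreover have "Suc k * (Suc k + 1) * (Suc k + 2) = (k + 1) * (k + 2) * (k + 3)" by (simp add: algebra_simps)
  ultimately show ?case by simp
qed

lemma SS_tight_at:
  assumes cr: "crossings n B = Z n" and hk: "2 * k + 4 + n \<le> 2 * j" and hj: "j \<le> n"
  shows "2 * SS B (j - 1) k = (k + 1) * (k + 2) \<and> 2 * k + 2 \<le> j - 1"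
proof -
  have h: "2 * k + 2 \<le> j - 1" using hk hj by linarith
  have h2: "2 * (k + (n - j)) + 4 \<le> n" using hk hj by presburger
  have "2 * GG B (n - (n - j)) (Suc k) = (k + 1) * (k + 2) * (k + 3)"
    by (rule descent[OF cr h2])
  then have g: "2 * GG B (Suc (j - 1)) (Suc k) = (k + 1) * (k + 2) * (k + 3)"
    using hj h by (simp add: Suc_diff_1)
  show ?thesis using GG_descent[OF h g] h by simp
qed

lemma above_diff_sum: "above_diff B i l c = (\<Sum>w\<in>{1..<i}. of_bool (B w l \<noteq> c))"
proof -
  have "{i'. 1 \<le> i' \<and> i' < i \<and> B i' l \<noteq> c} = {w \<in> {1..<i}. B w l \<noteq> c}" by auto
  moreover have "(\<Sum>w\<in>{1..<i}. of_bool (B w l \<noteq> c) :: nat) = card {w \<in> {1..<i}. B w l \<noteq> c}"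
    by (rule sum_bool_card) simp
  ultimately show ?thesis unfolding above_diff_def by simp
qed

theorem lemma12:
  fixes n i j m :: nat and blue :: "nat \<Rightarrow> nat \<Rightarrow> bool"
  assumes "normalized_2page n blue" and "crossing_optimal n blue"
    and "1 \<le> i" and "i < j" and "j \<le> n"
    and "1 \<le> m"
    and "int m \<le> min (int j - int (n div 2) - 1) (int j - int i - 1)"
  shows "int (above_diff blue i (assoc_order blue i j ! (m - 1)) (blue i j))
           \<ge> min (int j - int ((n + 1) div 2) - int m) (int i - 1)"
proof -
  have cr: "crossings n blue = Z n" using assms(2) unfolding crossing_optimal_def .
  define T where "T = j - 1"
  have jT: "j = Suc T" unfolding T_def using assms(4) by simp
  define xs where "xs = assoc_order blue i j"
  define l where "l = xs ! (m - 1)"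
  define a where "a = above_diff blue i l (blue i j)"
  have bas: "distinct xs" "set xs = {i<..<j}" "length xs = j - i - 1"
    using assoc_basic[of blue i j] unfolding xs_def by auto
  have mlen: "m - 1 < length xs" using bas(3) assms(6,7) by linarith
  have lin: "l \<in> {i<..<j}" unfolding l_def using mlen bas(2) nth_mem by metis
  then have il: "i < l" "l \<le> T" unfolding T_def by auto
  define ov where "ov = cnt blue T i l (blue i (Suc T))"
  have o: "ov = a + (m - 1)"
  proof -
    have "ov = (\<Sum>w\<in>{1..<i}. of_bool (blue w l \<noteq> blue i (Suc T))) + idxf blue i (Suc T) l"
      unfolding ov_def by (rule cnt_split[OF il])
    also have "idxf blue i (Suc T) l = m - 1"
      using assoc_idx[of "m - 1" blue i j] mlen unfolding l_def xs_def jT by simp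
    finally show ?thesis unfolding a_def above_diff_sum jT by simp
  qed
  show ?thesis
  proof (cases "2 * ov + 4 + n \<le> 2 * j")
    case True
    have t: "2 * SS blue T ov = (ov + 1) * (ov + 2)" "2 * ov + 2 \<le> T"
      using SS_tight_at[OF cr True assms(5)] unfolding T_def by auto
    have "m - 1 < ov + 2 - i"
    proof (rule tight_conseq[OF t(2) t(1)])
      show "1 \<le> i" by (rule assms(3))
      show "i \<le> T" using il by simp
      show "m - 1 < length (assoc_order blue i (Suc T))" using mlen unfolding xs_def jT .
      show "cnt blue T i (assoc_order blue i (Suc T) ! (m - 1)) (blue i (Suc T)) \<le> ov"
        unfolding ov_def l_def xs_def jT by simp
    qed
    then have "i \<le> a + 1" using o by linarith
    then show ?thesis unfolding a_def l_def xs_def by linarith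
  next
    case False
    then have "int j - int ((n + 1) div 2) - int m \<le> int a" using o assms(6) by presburger
    then show ?thesis unfolding a_def l_def xs_def by linarith
  qed
qed


end
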